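(* Let $1\le s<n$, $s^*=sn/(n-s)$, $0\le h\in L^s_{loc}(\mathbb R^n)$ and let $(\gamma_k)_{k\ge0}$ be nonnegative numbers. Define $a(Q)=\sum_{k=0}^\infty\gamma_k\,\ell(2^kQ)(\fint_{2^kQ}h^s\,dx)^{1/s}$. For every $1\le q<s^*$ there is $C$ such that for every cube $Q$ and every family $\{Q_i\}$ of pairwise disjoint cubes contained in $Q$, $$\sum_ia(Q_i)^q|Q_i|\le C^q\,\bar a(Q)^q|Q|,$$ where $\bar a(Q)=\sum_{k\ge0}\bar\gamma_k\,\ell(2^kQ)(\fint_{2^kQ}h^s\,dx)^{1/s}$, $\bar\gamma_0=C\gamma_0$ and $\bar\gamma_k=2^{-kn(\frac1s-\frac1q)^+}\sum_{l=k-1}^\infty\gamma_l\,2^{ln(\frac1s-\frac1q)^+}$ for $k\ge1$.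
   Context: Cubes $Q=\prod_i[a_i,a_i+\ell(Q))$; $2^kQ$ is the concentric cube of sidelength $2^k\ell(Q)$; $\fint_Eg=|E|^{-1}\int_Eg$; $t^+=\max(t,0)$. *)

theory Defs
  imports "HOL-Analysis.Analysis"
begin

definition cube :: "real^'n \<Rightarrow> real \<Rightarrow> (real^'n) set" where
  "cube a l = {x. \<forall>i. a$i \<le> x$i \<and> x$i < a$i + l}"

text \<open>Lower corner of the concentric cube 2^k Q (sidelength 2^k l).\<close>
definition dil_corner :: "real^'n \<Rightarrow> real \<Rightarrow> nat \<Rightarrow> real^'n" where
  "dil_corner a l k = (\<chi> i. a$i - (2^k - 1) * l / 2)"

definition avg :: "(real^'n) set \<Rightarrow> (real^'n \<Rightarrow> real) \<Rightarrow> real" where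
  "avg E g = (LINT x:E|lebesgue. g x) / measure lebesgue E"

definition epow :: "ennreal \<Rightarrow> real \<Rightarrow> ennreal" where
  "epow x p = (if x = \<infinity> then \<infinity> else ennreal (enn2real x powr p))"

definition aQ :: "(nat \<Rightarrow> ennreal) \<Rightarrow> (real^'n \<Rightarrow> real) \<Rightarrow> real \<Rightarrow> real^'n \<Rightarrow> real \<Rightarrow> ennreal" where
  "aQ g h s a l = (\<Sum>k. g k * ennreal (2^k * l *
      (avg (cube (dil_corner a l k) (2^k * l)) (\<lambda>x. h x powr s)) powr (1/s)))"

definition gbar :: "real \<Rightarrow> nat \<Rightarrow> real \<Rightarrow> real \<Rightarrow> (nat \<Rightarrow> real) \<Rightarrow> nat \<Rightarrow> ennreal" where
  "gbar C n s q \<gamma> k =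
     (if k = 0 then ennreal (C * \<gamma> 0)
      else ennreal (2 powr (- real k * real n * max (1/s - 1/q) 0)) *
           (\<Sum>j. ennreal (\<gamma> (j + (k - 1)) * 2 powr (real (j + (k - 1)) * real n * max (1/s - 1/q) 0))))"

end

theory Submission
  imports Defs
begin
lemma cube_borel: "cube (a::real^'n) l \<in> sets borel"
proof -
  have "cube a l = (\<Inter>i. {x. a$i \<le> x$i}) \<inter> (\<Inter>i. {x. x$i < a$i + l})"
    by (auto simp: cube_def)
  moreover have "(\<Inter>i. {x::real^'n. a$i \<le> x$i}) \<in> sets borel"
    by (intro borel_closed closed_INT ballI closed_halfspace_component_ge_cart)
  moreover have "(\<Inter>i. {x::real^'n. x$i < a$i + l}) \<in> sets borel"
    by (intro borel_open open_INT ballI open_halfspace_component_lt_cart) auto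
  ultimately show ?thesis by auto
qed

lemma cube_lebesgue[measurable]: "cube (a::real^'n) l \<in> sets lebesgue"
  using cube_borel[of a l] by (metis sets_lborel sets_completionI_sets)

lemma cube_sub_cbox: "cube (a::real^'n) l \<subseteq> cbox a (a + (\<chi> i. l))"
  by (force simp: cube_def mem_box_cart less_imp_le)
lemma box_sub_cube: "box (a::real^'n) (a + (\<chi> i. l)) \<subseteq> cube a l"
  by (force simp: cube_def mem_box_cart less_imp_le)

lemma emeasure_cube: assumes "0 \<le> l" shows "emeasure lebesgue (cube (a::real^'n) l) = ennreal (l ^ CARD('n))"
proof -
  have ne: "cbox a (a + (\<chi> i. l)) \<noteq> {}" proof -
    have "a \<in> cbox a (a + (\<chi> i. l))" using assms by (simp add: mem_box_cart)
    then show ?thesis by blast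
  qed
  have c: "measure lborel (cbox a (a + (\<chi> i. l))) = l ^ CARD('n)"
    using content_cbox_cart[OF ne] by simp
  have b: "measure lborel (box a (a + (\<chi> i. l))) = l ^ CARD('n)"
    using c by (simp only: measure_lborel_box_eq measure_lborel_cbox_eq)
  have ec: "emeasure lborel (cbox a (a + (\<chi> i. l))) = ennreal (l ^ CARD('n))"
    using c emeasure_lborel_cbox_finite[of a "a + (\<chi> i. l)"] by (simp add: emeasure_eq_ennreal_measure less_top)
  have eb: "emeasure lborel (box a (a + (\<chi> i. l))) = ennreal (l ^ CARD('n))"
    using b emeasure_lborel_box_finite[of a "a + (\<chi> i. l)"] by (simp add: emeasure_eq_ennreal_measure less_top)
  have "emeasure lborel (cube a l) \<le> ennreal (l ^ CARD('n))"
    using emeasure_mono[OF cube_sub_cbox[of a l], of lborel] ec by simp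
  moreover have "emeasure lborel (cube a l) \<ge> ennreal (l ^ CARD('n))"
    using emeasure_mono[OF box_sub_cube[of a l], of lborel] eb cube_borel[of a l] by simp
  ultimately show ?thesis using cube_borel[of a l] by simp
qed

lemma measure_cube: assumes "0 \<le> l" shows "measure lebesgue (cube (a::real^'n) l) = l ^ CARD('n)"
  by (subst measure_def, subst emeasure_cube[OF assms]) (simp add: assms)

definition dil :: "real^'n \<Rightarrow> real \<Rightarrow> nat \<Rightarrow> (real^'n) set" where
  "dil b r k = cube (dil_corner b r k) (2^k * r)"

definition Iv :: "(real^'n \<Rightarrow> real) \<Rightarrow> real \<Rightarrow> (real^'n) set \<Rightarrow> real" where
  "Iv h s E = enn2real (\<integral>\<^sup>+ x. ennreal (h x powr s) * indicator E x \<partial>lebesgue)"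

lemma cube_coords:
  assumes "cube (b::real^'n) r \<subseteq> cube a l" "0 < r"
  shows "a$i \<le> b$i \<and> b$i + r \<le> a$i + l"
proof
  have "b \<in> cube b r" using assms(2) by (simp add: cube_def)
  then show "a$i \<le> b$i" using assms(1) by (auto simp: cube_def)
  show "b$i + r \<le> a$i + l"
  proof (rule ccontr)
    assume nt: "\<not> b$i + r \<le> a$i + l"
    define t where "t = max (b$i) (a$i + l)"
    define y where "y = (\<chi> j. if j = i then t else b$j)"
    have "y \<in> cube b r" using assms(2) nt
      by (auto simp: cube_def y_def t_def)
    moreover have "y \<notin> cube a l" by (auto simp: cube_def y_def t_def intro!: exI[of _ i])
    ultimately show False using assms(1) by blast
  qed
qed

lemma coords_cube:
  assumes "\<And>i. a$i \<le> b$i \<and> b$i + r \<le> a$i + l"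
  shows "cube (b::real^'n) r \<subseteq> cube a l"
  unfolding cube_def
proof (intro subsetI CollectI allI)
  fix x i assume "x \<in> {x. \<forall>i. b $ i \<le> x $ i \<and> x $ i < b $ i + r}"
  then have "b$i \<le> x$i" "x$i < b$i + r" by auto
  with assms[of i] show "a $ i \<le> x $ i \<and> x $ i < a $ i + l" by linarith
qed

lemma dil_corner_nth[simp]: "dil_corner b r k $ i = b$i - (2^k - 1) * r / 2"
  by (simp add: dil_corner_def)

lemma dil_0[simp]: "dil b r 0 = cube b r"
  by (simp add: dil_def dil_corner_def vec_eq_iff)

lemma dil_mono:
  assumes "cube (b::real^'n) r \<subseteq> cube a l" "0 < r" "(2^k - 1) * r \<le> (2^j - 1) * l"
  shows "dil b r k \<subseteq> dil a l j"
  unfolding dil_def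
proof (rule coords_cube)
  fix i
  have c: "a$i \<le> b$i" "b$i + r \<le> a$i + l" using cube_coords[OF assms(1,2)] by auto
  show "dil_corner a l j $ i \<le> dil_corner b r k $ i \<and>
        dil_corner b r k $ i + 2 ^ k * r \<le> dil_corner a l j $ i + 2 ^ j * l"
    using c assms(3) by (simp add: field_simps)
qed

lemma dil_local:
  assumes "x \<in> dil (b::real^'n) r k" "0 < r" "r \<le> \<rho>"
  shows "cube b r \<subseteq> cube (\<chi> i. x$i - (2^k + 1) * \<rho> / 2) ((2^k + 1) * \<rho>)"
proof (rule coords_cube)
  fix i
  have x: "b$i - (2^k - 1) * r / 2 \<le> x$i" "x$i < b$i - (2^k - 1) * r / 2 + 2^k * r"
    using assms(1) by (auto simp: dil_def cube_def)
  have "(2^k + 1) * r \<le> (2^k + 1) * \<rho>" using assms(3) by (intro mult_left_mono) auto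
  then show "(\<chi> i. x$i - (2^k + 1) * \<rho> / 2) $ i \<le> b $ i \<and>
         b $ i + r \<le> (\<chi> i. x$i - (2^k + 1) * \<rho> / 2) $ i + (2^k + 1) * \<rho>"
    using x by (simp add: field_simps)
qed

lemma dil_lebesgue[measurable]: "dil b r k \<in> sets lebesgue"
  by (simp add: dil_def cube_lebesgue)

lemma cube_bounded: "bounded (cube (a::real^'n) l)"
  using cube_sub_cbox bounded_cbox bounded_subset by metis

lemma Iv_eq_LINT:
  assumes "h \<in> borel_measurable lebesgue" "E \<in> sets lebesgue" "\<And>x. 0 \<le> h x"
  shows "Iv h s E = (LINT x:E|lebesgue. h x powr s)"
  unfolding Iv_def set_lebesgue_integral_def
  by (rule enn2real_nn_integral_eq_integral)
     (use assms in \<open>auto simp: indicator_def\<close>)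


lemma nn_sum_le:
  fixes f :: "real^'n \<Rightarrow> ennreal"
  assumes "finite G" "f \<in> borel_measurable lebesgue" "\<And>P. P \<in> G \<Longrightarrow> E P \<in> sets lebesgue"
    "D \<in> sets lebesgue" "0 \<le> N"
    "\<And>x. (\<Sum>P\<in>G. indicator (E P) x) \<le> N * (indicator D x :: real)"
  shows "(\<Sum>P\<in>G. \<integral>\<^sup>+ x. f x * indicator (E P) x \<partial>lebesgue) \<le> ennreal N * (\<integral>\<^sup>+ x. f x * indicator D x \<partial>lebesgue)"
proof -
  have "(\<Sum>P\<in>G. \<integral>\<^sup>+ x. f x * indicator (E P) x \<partial>lebesgue) = (\<integral>\<^sup>+ x. (\<Sum>P\<in>G. f x * indicator (E P) x) \<partial>lebesgue)"
    by (rule nn_integral_sum[symmetric]) (use assms in auto)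
  also have "\<dots> \<le> (\<integral>\<^sup>+ x. ennreal N * (f x * indicator D x) \<partial>lebesgue)"
  proof (rule nn_integral_mono)
    fix x
    have "(\<Sum>P\<in>G. f x * indicator (E P) x) = f x * ennreal (\<Sum>P\<in>G. indicator (E P) x)"
    proof -
      have "ennreal (\<Sum>P\<in>G. indicator (E P) x) = (\<Sum>P\<in>G. ennreal (indicator (E P) x))"
        by (rule sum_ennreal[symmetric]) auto
      then show ?thesis by (simp add: ennreal_indicator sum_distrib_left)
    qed
    also have "\<dots> \<le> f x * ennreal (N * indicator D x)"
      by (intro mult_left_mono ennreal_leI assms(6)) auto
    also have "\<dots> = ennreal N * (f x * indicator D x)"
      using assms(5) by (simp add: ennreal_mult ennreal_indicator mult_ac)
    finally show "(\<Sum>P\<in>G. f x * indicator (E P) x) \<le> ennreal N * (f x * indicator D x)" .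
  qed
  also have "\<dots> = ennreal N * (\<integral>\<^sup>+ x. f x * indicator D x \<partial>lebesgue)"
    by (rule nn_integral_cmult) (use assms in auto)
  finally show ?thesis .
qed

lemma Iv_nonneg[simp]: "0 \<le> Iv h s E" by (simp add: Iv_def)

context
  fixes h :: "real^'n \<Rightarrow> real" and s :: real
  assumes h_nonneg: "\<And>x. 0 \<le> h x"
    and h_meas: "h \<in> borel_measurable lebesgue"
    and h_loc: "\<And>K. compact K \<Longrightarrow> set_integrable lebesgue K (\<lambda>x. h x powr s)"
begin

lemma fin_cube: "(\<integral>\<^sup>+ x. ennreal (h x powr s) * indicator (cube a l) x \<partial>lebesgue) < \<infinity>"
proof -
  have "set_integrable lebesgue (cube a l) (\<lambda>x. h x powr s)"
    by (rule set_integrable_subset[OF h_loc[OF compact_cbox] cube_lebesgue cube_sub_cbox])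
  then have "integrable lebesgue (\<lambda>x. indicator (cube a l) x * h x powr s)"
    by (simp add: set_integrable_def)
  from integrableD(2)[OF this] show ?thesis
    by (simp add: ennreal_mult' ennreal_indicator mult.commute less_top)
qed

lemma fin_dil: "(\<integral>\<^sup>+ x. ennreal (h x powr s) * indicator (dil b r k) x \<partial>lebesgue) < \<infinity>"
  unfolding dil_def by (rule fin_cube)

lemma Iv_mono:
  assumes "E \<subseteq> E'" "(\<integral>\<^sup>+ x. ennreal (h x powr s) * indicator E' x \<partial>lebesgue) < \<infinity>"
  shows "Iv h s E \<le> Iv h s E'"
  unfolding Iv_def
proof (rule enn2real_mono)
  show "(\<integral>\<^sup>+ x. ennreal (h x powr s) * indicator E x \<partial>lebesgue) \<le> (\<integral>\<^sup>+ x. ennreal (h x powr s) * indicator E' x \<partial>lebesgue)"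
    by (intro nn_integral_mono mult_left_mono) (use assms(1) in \<open>auto simp: indicator_def\<close>)
qed (use assms(2) in auto)

lemma Iv_sum_le:
  assumes "finite G" "\<And>P. P \<in> G \<Longrightarrow> E P \<in> sets lebesgue"
    "D \<in> sets lebesgue" "0 \<le> N"
    "\<And>x. (\<Sum>P\<in>G. indicator (E P) x) \<le> N * (indicator D x :: real)"
    "(\<integral>\<^sup>+ x. ennreal (h x powr s) * indicator D x \<partial>lebesgue) < \<infinity>"
  shows "(\<Sum>P\<in>G. Iv h s (E P)) \<le> N * Iv h s D"
proof -
  have m: "(\<lambda>x. ennreal (h x powr s)) \<in> borel_measurable lebesgue" using h_meas by measurable
  have le: "(\<Sum>P\<in>G. \<integral>\<^sup>+ x. ennreal (h x powr s) * indicator (E P) x \<partial>lebesgue) \<le> ennreal N * (\<integral>\<^sup>+ x. ennreal (h x powr s) * indicator D x \<partial>lebesgue)"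
    by (rule nn_sum_le[OF assms(1) m assms(2-5)])
  have rhs: "ennreal N * (\<integral>\<^sup>+ x. ennreal (h x powr s) * indicator D x \<partial>lebesgue) < \<infinity>"
    using assms(6) by (simp add: ennreal_mult_less_top)
  have fin: "(\<integral>\<^sup>+ x. ennreal (h x powr s) * indicator (E P) x \<partial>lebesgue) < \<infinity>" if "P \<in> G" for P
  proof -
    have "(\<integral>\<^sup>+ x. ennreal (h x powr s) * indicator (E P) x \<partial>lebesgue) \<le> (\<Sum>P\<in>G. \<integral>\<^sup>+ x. ennreal (h x powr s) * indicator (E P) x \<partial>lebesgue)"
      by (rule member_le_sum) (use that assms(1) in auto)
    then show ?thesis using le rhs by (meson order.trans order_le_less_trans)
  qed
  have "(\<Sum>P\<in>G. Iv h s (E P)) = enn2real (\<Sum>P\<in>G. \<integral>\<^sup>+ x. ennreal (h x powr s) * indicator (E P) x \<partial>lebesgue)"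
    unfolding Iv_def by (subst enn2real_sum) (use fin in auto)
  also have "\<dots> \<le> enn2real (ennreal N * (\<integral>\<^sup>+ x. ennreal (h x powr s) * indicator D x \<partial>lebesgue))"
    by (rule enn2real_mono[OF le]) (use rhs in auto)
  also have "\<dots> = N * Iv h s D"
    unfolding Iv_def using assms(4) by (simp add: enn2real_mult)
  finally show ?thesis .
qed

end

lemma count_le:
  assumes "finite G" "\<And>P. P \<in> G \<Longrightarrow> 0 < snd P"
    "\<And>P. P \<in> G \<Longrightarrow> cube (fst P) (snd P) \<subseteq> cube (c::real^'n) L"
    "\<And>P P'. P \<in> G \<Longrightarrow> P' \<in> G \<Longrightarrow> P \<noteq> P' \<Longrightarrow> cube (fst P) (snd P) \<inter> cube (fst P') (snd P') = {}"
    "0 \<le> L"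
  shows "(\<Sum>P\<in>G. (snd P) ^ CARD('n)) \<le> L ^ CARD('n)"
proof -
  have pw: "(\<Sum>P\<in>G. indicator (cube (fst P) (snd P)) x) \<le> 1 * (indicator (cube c L) x :: real)" for x
  proof -
    let ?S = "{P\<in>G. x \<in> cube (fst P) (snd P)}"
    have e: "(\<Sum>P\<in>G. indicator (cube (fst P) (snd P)) x) = (\<Sum>P\<in>?S. 1::real)"
      using assms(1) by (simp add: indicator_def sum.If_cases Int_def)
    have c1: "card ?S \<le> Suc 0"
    proof (subst card_le_Suc0_iff_eq)
      show "finite ?S" using assms(1) by simp
      show "\<forall>a\<in>?S. \<forall>b\<in>?S. a = b" using assms(4) by blast
    qed
    show ?thesis
    proof (cases "?S = {}")
      case True then show ?thesis using e by (simp add: indicator_def)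
    next
      case False
      then have "x \<in> cube c L" using assms(3) by blast
      then show ?thesis using e c1 by (simp add: indicator_def)
    qed
  qed
  have le: "(\<Sum>P\<in>G. \<integral>\<^sup>+ x. (\<lambda>_. 1::ennreal) x * indicator (cube (fst P) (snd P)) x \<partial>lebesgue)
     \<le> ennreal 1 * (\<integral>\<^sup>+ x. (\<lambda>_. 1::ennreal) x * indicator (cube c L) x \<partial>lebesgue)"
    by (rule nn_sum_le[OF assms(1) _ _ _ _ pw]) auto
  have ee2: "integral\<^sup>N lebesgue (indicator (cube b r)) = ennreal (r ^ CARD('n))"
    if "0 \<le> r" for b :: "real^'n" and r
    by (metis nn_integral_indicator cube_lebesgue emeasure_cube that)
  have le': "(\<Sum>P\<in>G. integral\<^sup>N lebesgue (indicator (cube (fst P) (snd P)))) \<le> integral\<^sup>N lebesgue (indicator (cube c L))"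
    using le by simp
  have "ennreal (\<Sum>P\<in>G. (snd P) ^ CARD('n)) = (\<Sum>P\<in>G. ennreal ((snd P) ^ CARD('n)))"
    using assms(2) by (intro sum_ennreal[symmetric]) (auto intro: less_imp_le)
  also have "\<dots> = (\<Sum>P\<in>G. integral\<^sup>N lebesgue (indicator (cube (fst P) (snd P))))"
    using assms(2) by (intro sum.cong refl) (simp only: ee2 less_imp_le)
  also have "\<dots> \<le> ennreal (L ^ CARD('n))"
    using order.trans[OF le' eq_refl[OF ee2[OF assms(5)]]] .
  finally show ?thesis using assms(5) by (simp add: ennreal_le_iff)
qed

definition Ak :: "(real^'n \<Rightarrow> real) \<Rightarrow> real \<Rightarrow> real^'n \<Rightarrow> real \<Rightarrow> nat \<Rightarrow> real" where
  "Ak h s b r k = (2^k*r) powr (1 - real CARD('n)/s) * Iv h s (dil b r k) powr (1/s)"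

lemma Ak_nonneg[simp]: "0 \<le> Ak h s b r k" by (simp add: Ak_def)

lemma aQ_eq:
  fixes h :: "real^'n \<Rightarrow> real"
  assumes "0 < r" "0 < s" "h \<in> borel_measurable lebesgue" "\<And>x. 0 \<le> h x"
  shows "aQ g h s b r = (\<Sum>k. g k * ennreal (Ak h s b r k))"
  unfolding aQ_def
proof (intro suminf_cong arg_cong2[where f="(*)"] refl arg_cong[where f=ennreal])
  fix k
  define R where "R = (2::real)^k * r"
  have R: "0 < R" using assms(1) by (simp add: R_def)
  have av: "avg (cube (dil_corner b r k) (2 ^ k * r)) (\<lambda>x. h x powr s) = Iv h s (dil b r k) / R ^ CARD('n)"
    unfolding avg_def using R
    by (simp add: Iv_eq_LINT[OF assms(3) cube_lebesgue assms(4)] dil_def measure_cube R_def)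
  have "R * (Iv h s (dil b r k) / R ^ CARD('n)) powr (1/s) = R * (Iv h s (dil b r k) powr (1/s) / R powr (real CARD('n) / s))"
    using R by (simp add: powr_divide powr_realpow[symmetric] powr_powr)
  also have "\<dots> = R powr (1 - real CARD('n) / s) * Iv h s (dil b r k) powr (1/s)"
    using R by (simp add: powr_diff)
  finally show "2 ^ k * r * avg (cube (dil_corner b r k) (2 ^ k * r)) (\<lambda>x. h x powr s) powr (1 / s) = Ak h s b r k"
    by (simp add: Ak_def av R_def)
qed


lemma jensen_pos:
  fixes w y :: "'i \<Rightarrow> real"
  assumes "finite A" "A \<noteq> {}" "\<And>i. i \<in> A \<Longrightarrow> 0 < w i" "\<And>i. i \<in> A \<Longrightarrow> 0 < y i" "1 \<le> p"
  shows "(\<Sum>i\<in>A. w i * y i) powr p \<le> (\<Sum>i\<in>A. w i) powr (p - 1) * (\<Sum>i\<in>A. w i * y i powr p)"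
proof -
  define W where "W = (\<Sum>i\<in>A. w i)"
  have W: "0 < W" unfolding W_def using assms by (intro sum_pos) auto
  have "(\<lambda>x. x powr p) (\<Sum>i\<in>A. (w i / W) *\<^sub>R y i) \<le> (\<Sum>i\<in>A. (w i / W) * (\<lambda>x. x powr p) (y i))"
    by (rule convex_on_sum[OF assms(1,2) powr_convex[OF assms(5)]])
       (use assms W in \<open>auto simp: W_def sum_divide_distrib[symmetric] zero_le_divide_iff less_imp_le\<close>)
  then have "((\<Sum>i\<in>A. w i * y i) / W) powr p \<le> (\<Sum>i\<in>A. w i * y i powr p) / W"
    by (simp add: sum_divide_distrib[symmetric] sum_distrib_left)
  then have "(\<Sum>i\<in>A. w i * y i) powr p / W powr p \<le> (\<Sum>i\<in>A. w i * y i powr p) / W"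
    using W assms by (subst powr_divide[symmetric]) (auto intro!: sum_nonneg)
  then have "(\<Sum>i\<in>A. w i * y i) powr p \<le> (\<Sum>i\<in>A. w i * y i powr p) / W * W powr p"
    using W by (simp add: divide_le_eq)
  also have "\<dots> = W powr (p - 1) * (\<Sum>i\<in>A. w i * y i powr p)"
    using W by (simp add: powr_diff field_simps)
  finally show ?thesis by (simp add: W_def)
qed

lemma jensen:
  fixes w y :: "'i \<Rightarrow> real"
  assumes "finite A" "\<And>i. i \<in> A \<Longrightarrow> 0 \<le> w i" "\<And>i. i \<in> A \<Longrightarrow> 0 \<le> y i" "1 \<le> p"
  shows "(\<Sum>i\<in>A. w i * y i) powr p \<le> (\<Sum>i\<in>A. w i) powr (p - 1) * (\<Sum>i\<in>A. w i * y i powr p)"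
proof -
  define A' where "A' = {i\<in>A. 0 < w i \<and> 0 < y i}"
  have A'A: "A' \<subseteq> A" by (auto simp: A'_def)
  have fA': "finite A'" using assms(1) A'A by (rule finite_subset[rotated])
  have s1: "(\<Sum>i\<in>A. w i * y i) = (\<Sum>i\<in>A'. w i * y i)"
    using assms(1) A'A assms(2,3) by (intro sum.mono_neutral_right) (auto simp: A'_def less_le)
  have s2: "(\<Sum>i\<in>A. w i * y i powr p) = (\<Sum>i\<in>A'. w i * y i powr p)"
    using assms(1) A'A assms(2,3,4) by (intro sum.mono_neutral_right) (auto simp: A'_def less_le)
  have rhs0: "0 \<le> (\<Sum>i\<in>A. w i) powr (p - 1) * (\<Sum>i\<in>A. w i * y i powr p)"
    using assms by (intro mult_nonneg_nonneg sum_nonneg) auto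
  show ?thesis
  proof (cases "A' = {}")
    case True
    then show ?thesis using s1 rhs0 by simp
  next
    case False
    have "(\<Sum>i\<in>A'. w i * y i) powr p \<le> (\<Sum>i\<in>A'. w i) powr (p - 1) * (\<Sum>i\<in>A'. w i * y i powr p)"
      by (rule jensen_pos[OF fA' False _ _ assms(4)]) (auto simp: A'_def)
    also have "\<dots> \<le> (\<Sum>i\<in>A. w i) powr (p - 1) * (\<Sum>i\<in>A'. w i * y i powr p)"
    proof (intro mult_right_mono powr_mono2)
      show "(\<Sum>i\<in>A'. w i) \<le> (\<Sum>i\<in>A. w i)"
        using assms(1,2) A'A by (intro sum_mono2) auto
      show "0 \<le> (\<Sum>i\<in>A'. w i)" using A'A assms(2) by (intro sum_nonneg) auto
      show "0 \<le> (\<Sum>i\<in>A'. w i * y i powr p)" using A'A assms(2) by (intro sum_nonneg) auto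
    qed (use assms(4) in auto)
    finally show ?thesis using s1 s2 by simp
  qed
qed

lemma superadd:
  fixes x :: "'i \<Rightarrow> real"
  assumes "finite A" "\<And>i. i \<in> A \<Longrightarrow> 0 \<le> x i" "1 \<le> p"
  shows "(\<Sum>i\<in>A. x i powr p) \<le> (\<Sum>i\<in>A. x i) powr p"
proof -
  define X where "X = (\<Sum>i\<in>A. x i)"
  have X0: "0 \<le> X" unfolding X_def using assms by (intro sum_nonneg) auto
  have "(\<Sum>i\<in>A. x i powr p) \<le> (\<Sum>i\<in>A. x i * X powr (p - 1))"
  proof (rule sum_mono)
    fix i assume i: "i \<in> A"
    have xi: "x i \<le> X" unfolding X_def using assms i by (intro member_le_sum) auto
    show "x i powr p \<le> x i * X powr (p - 1)"
    proof (cases "x i = 0")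
      case True then show ?thesis using assms(3) by simp
    next
      case False
      then have pos: "0 < x i" using assms(2) i by (simp add: less_le)
      have "x i powr p = x i * x i powr (p - 1)" using pos by (simp add: powr_diff field_simps)
      also have "\<dots> \<le> x i * X powr (p - 1)"
        using pos xi assms(3) by (intro mult_left_mono powr_mono2) auto
      finally show ?thesis .
    qed
  qed
  also have "\<dots> = X * X powr (p - 1)" by (simp add: X_def sum_distrib_right)
  also have "\<dots> = X powr p"
  proof (cases "X = 0")
    case True then show ?thesis using assms(3) by simp
  next
    case False then show ?thesis using X0 by (simp add: powr_diff field_simps)
  qed
  finally show ?thesis by (simp add: X_def)
qed

lemma powmean_small:
  fixes x :: "'i \<Rightarrow> real"
  assumes "finite A" "\<And>i. i \<in> A \<Longrightarrow> 0 \<le> x i" "0 < p" "p \<le> 1"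
  shows "(\<Sum>i\<in>A. x i powr p) \<le> real (card A) powr (1 - p) * (\<Sum>i\<in>A. x i) powr p"
proof -
  have j: "(\<Sum>i\<in>A. 1 * x i powr p) powr (1/p) \<le> (\<Sum>i\<in>A. 1) powr (1/p - 1) * (\<Sum>i\<in>A. 1 * (x i powr p) powr (1/p))"
    by (rule jensen) (use assms in \<open>auto simp: field_simps\<close>)
  have e: "(\<Sum>i\<in>A. 1 * (x i powr p) powr (1/p)) = (\<Sum>i\<in>A. x i)"
    using assms by (intro sum.cong refl) (auto simp: powr_powr)
  define S where "S = (\<Sum>i\<in>A. x i powr p)"
  have S0: "0 \<le> S" unfolding S_def by (intro sum_nonneg) auto
  have "S powr (1/p) \<le> real (card A) powr (1/p - 1) * (\<Sum>i\<in>A. x i)"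
    using j e by (simp add: S_def)
  then have "(S powr (1/p)) powr p \<le> (real (card A) powr (1/p - 1) * (\<Sum>i\<in>A. x i)) powr p"
    using assms S0 by (intro powr_mono2) auto
  also have "\<dots> = real (card A) powr ((1/p - 1) * p) * (\<Sum>i\<in>A. x i) powr p"
    using assms by (simp add: powr_mult powr_powr sum_nonneg)
  also have "(1/p - 1) * p = 1 - p" using assms(3) by (simp add: field_simps)
  finally show ?thesis using S0 assms by (simp add: powr_powr S_def)
qed

lemma geom_le:
  fixes x :: real
  assumes "0 \<le> x" "x < 1"
  shows "(\<Sum>m\<in>{k..M}. x ^ m) \<le> x ^ k / (1 - x)"
proof -
  have "(\<Sum>m\<in>{k..M}. x ^ m) \<le> (\<Sum>m\<in>{k..max k M}. x ^ m)"
    using assms by (intro sum_mono2) auto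
  also have "\<dots> = (x ^ k - x ^ Suc (max k M)) / (1 - x)"
    using sum_gp_multiplied[of k "max k M" x] assms by (simp add: field_simps)
  also have "\<dots> \<le> x ^ k / (1 - x)" using assms by (intro divide_right_mono) auto
  finally show ?thesis .
qed


definition mP :: "real \<Rightarrow> real \<Rightarrow> nat" where "mP l r = nat \<lfloor>log 2 (l / r)\<rfloor>"

lemma mP:
  assumes "0 < r" "r \<le> l"
  shows "2 ^ mP l r * r \<le> l" "l < 2 ^ Suc (mP l r) * r"
proof -
  define t where "t = log 2 (l / r)"
  have lr: "1 \<le> l / r" using assms by simp
  have t0: "0 \<le> t" unfolding t_def using lr by simp
  have ft: "real (mP l r) = of_int \<lfloor>t\<rfloor>" unfolding mP_def t_def[symmetric] using t0 by simp
  have e: "2 powr t = l / r" unfolding t_def using lr by simp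
  have "(2::real) ^ mP l r = 2 powr real (mP l r)" by (simp add: powr_realpow)
  also have "\<dots> \<le> 2 powr t" using ft by simp
  finally have "2 ^ mP l r \<le> l / r" using e by simp
  then show "2 ^ mP l r * r \<le> l" using assms by (simp add: field_simps)
  have "l / r = 2 powr t" using e by simp
  also have "\<dots> < 2 powr (real (mP l r) + 1)" using ft by (simp add: real_of_int_floor_add_one_gt)
  also have "\<dots> = 2 ^ Suc (mP l r)" by (simp add: powr_realpow[symmetric] powr_add)
  finally show "l < 2 ^ Suc (mP l r) * r" using assms by (simp add: field_simps)
qed

lemma Ak_pow:
  assumes "0 < r" "0 < s" "0 < q"
  shows "Ak h s b r k powr q * r ^ CARD('n) =
    2 powr (real k * (q - q * real CARD('n) / s)) * r powr (real CARD('n) + q - q * real CARD('n) / s)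
      * Iv h s (dil b (r::real) k :: (real^'n) set) powr (q / s)"
proof -
  define n where "n = real CARD('n)"
  define I where "I = Iv h s (dil b r k :: (real^'n) set)"
  have I0: "0 \<le> I" by (simp add: I_def)
  have "Ak h s b r k powr q = ((2^k*r) powr (1 - n/s)) powr q * (I powr (1/s)) powr q"
    unfolding Ak_def n_def I_def using assms by (simp add: powr_mult)
  also have "\<dots> = (2^k*r) powr ((1 - n/s) * q) * I powr (q/s)"
    using I0 by (simp add: powr_powr)
  also have "(2^k*r) powr ((1 - n/s) * q) = (2 powr real k) powr ((1 - n/s) * q) * r powr ((1 - n/s) * q)"
    using assms by (simp add: powr_mult powr_realpow)
  also have "(2 powr real k) powr ((1 - n/s) * q) = 2 powr (real k * (q - q * n / s))"
    by (simp add: powr_powr field_simps)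
  finally have "Ak h s b r k powr q * r ^ CARD('n) = 2 powr (real k * (q - q * n / s)) * (r powr ((1 - n/s) * q) * r powr n) * I powr (q/s)"
    using assms by (simp add: n_def powr_realpow mult_ac)
  also have "r powr ((1 - n/s) * q) * r powr n = r powr (n + q - q * n / s)"
    using assms by (simp add: powr_add[symmetric] field_simps)
  finally show ?thesis by (simp add: n_def I_def)
qed

lemma sum_pow_card:
  fixes x :: "'i \<Rightarrow> real"
  assumes "finite A" "\<And>i. i \<in> A \<Longrightarrow> 0 \<le> x i" "0 < p"
  shows "(\<Sum>i\<in>A. x i powr p) \<le> real (card A) powr (max (1 - p) 0) * (\<Sum>i\<in>A. x i) powr p"
proof (cases "A = {}")
  case True then show ?thesis by simp
next
  case False
  then have "0 < card A" using assms(1) by (simp add: card_gt_0_iff)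
  then have c: "1 \<le> real (card A)" by simp
  show ?thesis
  proof (cases "p \<le> 1")
    case True then show ?thesis using powmean_small[OF assms True] by simp
  next
    case False then show ?thesis using superadd[OF assms(1,2), where p=p] c by simp
  qed
qed


lemma group_bound:
  fixes a :: "real^'n" and h :: "real^'n \<Rightarrow> real"
  assumes h_nonneg: "\<And>x. 0 \<le> h x"
    and h_meas: "h \<in> borel_measurable lebesgue"
    and h_loc: "\<And>K. compact K \<Longrightarrow> set_integrable lebesgue K (\<lambda>x. h x powr s)"
    and s0: "0 < s" and q0: "0 < q" and nu0: "0 \<le> real CARD('n) + q - q * real CARD('n) / s"
    and l0: "0 < l" and fG: "finite G"
    and Gsub: "\<And>P. P \<in> G \<Longrightarrow> 0 < snd P \<and> cube (fst P) (snd P) \<subseteq> cube a l"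
    and disj: "\<And>P P'. P \<in> G \<Longrightarrow> P' \<in> G \<Longrightarrow> P \<noteq> P' \<Longrightarrow> cube (fst P) (snd P) \<inter> cube (fst P') (snd P') = {}"
    and Gm: "\<And>P. P \<in> G \<Longrightarrow> mP l (snd P) = m" and km: "k \<le> m"
  shows "(\<Sum>P\<in>G. Ak h s (fst P) (snd P) k powr q * (snd P) ^ CARD('n))
    \<le> 2 powr (real k * q + 2 * real CARD('n) * (q/s) + real CARD('n) * max (1 - q/s) 0)
       * 2 powr (- (real m * (real CARD('n) + q - q * real CARD('n) / s - real CARD('n) * max (1 - q/s) 0)))
       * l powr (real CARD('n) + q - q * real CARD('n) / s) * Iv h s (dil a l 1) powr (q / s)"
proof -
  define n where "n = real CARD('n)"
  define \<rho> where "\<rho> = l / 2 ^ m"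
  define \<nu> where "\<nu> = n + q - q * n / s"
  define d where "d = max (1 - q/s) 0"
  define p where "p = q / s"
  define J where "J = Iv h s (dil a l 1)"
  define N :: real where "N = 2 ^ ((k + 2) * CARD('n))"
  have \<rho>0: "0 < \<rho>" using l0 by (simp add: \<rho>_def)
  have rP: "snd P \<le> \<rho> \<and> \<rho> / 2 < snd P \<and> 0 < snd P \<and> snd P \<le> l" if "P \<in> G" for P
  proof -
    have r0: "0 < snd P" using Gsub[OF that] by auto
    have rl: "snd P \<le> l"
    proof -
      have "a $ undefined \<le> fst P $ undefined \<and> fst P $ undefined + snd P \<le> a $ undefined + l"
        using Gsub[OF that] by (intro cube_coords) auto
      then show ?thesis by linarith
    qed
    have m1: "2 ^ m * snd P \<le> l" and m2: "l < 2 ^ Suc m * snd P"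
      using mP[OF r0 rl] Gm[OF that] by auto
    show ?thesis using m1 m2 r0 rl by (auto simp: \<rho>_def field_simps)
  qed
  have cardG: "real (card G) \<le> 2 powr (real (m + 1) * n)"
  proof -
    have "real (card G) * (\<rho> / 2) ^ CARD('n) = (\<Sum>P\<in>G. (\<rho> / 2) ^ CARD('n))" by simp
    also have "\<dots> \<le> (\<Sum>P\<in>G. (snd P) ^ CARD('n))"
      using rP \<rho>0 by (intro sum_mono power_mono) (auto simp: less_imp_le)
    also have "\<dots> \<le> l ^ CARD('n)"
      by (rule count_le[OF fG]) (use Gsub disj l0 in auto)
    finally have "real (card G) * (\<rho> / 2) ^ CARD('n) \<le> l ^ CARD('n)" .
    then have "real (card G) \<le> l ^ CARD('n) / (\<rho> / 2) ^ CARD('n)"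
      using \<rho>0 by (simp add: field_simps)
    also have "\<dots> = (2 ^ (m + 1)) ^ CARD('n)"
      using l0 by (simp add: \<rho>_def power_divide field_simps power_mult_distrib)
    also have "\<dots> = 2 ^ ((m + 1) * CARD('n))" by (simp only: power_mult)
    also have "\<dots> = 2 powr (real ((m + 1) * CARD('n)))" by (rule powr_realpow[symmetric]) simp
    also have "\<dots> = 2 powr (real (m + 1) * n)" by (simp add: n_def algebra_simps)
    finally show ?thesis .
  qed
  have dsub: "dil (fst P) (snd P) k \<subseteq> dil a l 1" if "P \<in> G" for P
  proof (rule dil_mono)
    show "cube (fst P) (snd P) \<subseteq> cube a l" "0 < snd P" using Gsub[OF that] by auto
    have "(2 ^ k - 1) * snd P \<le> 2 ^ m * snd P"
    proof (rule mult_right_mono)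
      have "(2::real) ^ k \<le> 2 ^ m" using km by (intro power_increasing) auto
      then show "(2::real) ^ k - 1 \<le> 2 ^ m" by linarith
    qed (use rP[OF that] in auto)
    also have "\<dots> \<le> l" using rP[OF that] by (simp add: \<rho>_def field_simps)
    finally show "(2 ^ k - 1) * snd P \<le> (2 ^ 1 - 1) * l" by simp
  qed
  have pw: "(\<Sum>P\<in>G. indicator (dil (fst P) (snd P) k) x) \<le> N * (indicator (dil a l 1) x :: real)" for x
  proof -
    let ?S = "{P\<in>G. x \<in> dil (fst P) (snd P) k}"
    have e: "(\<Sum>P\<in>G. indicator (dil (fst P) (snd P) k) x) = real (card ?S)"
      using fG by (simp add: indicator_def sum.If_cases Int_def)
    show ?thesis
    proof (cases "?S = {}")
      case True then show ?thesis using e by (simp add: indicator_def N_def)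
    next
      case False
      then have xin: "x \<in> dil a l 1" using dsub by blast
      define c :: "real^'n" where "c = (\<chi> i. x$i - (2^k + 1) * \<rho> / 2)"
      have "real (card ?S) * (\<rho> / 2) ^ CARD('n) = (\<Sum>P\<in>?S. (\<rho> / 2) ^ CARD('n))" by simp
      also have "\<dots> \<le> (\<Sum>P\<in>?S. (snd P) ^ CARD('n))"
        using rP \<rho>0 by (intro sum_mono power_mono) (auto simp: less_imp_le)
      also have "\<dots> \<le> ((2^k + 1) * \<rho>) ^ CARD('n)"
      proof (rule count_le)
        show "finite ?S" using fG by simp
        show "cube (fst P) (snd P) \<subseteq> cube c ((2 ^ k + 1) * \<rho>)" if "P \<in> ?S" for P
          unfolding c_def using that rP[of P] by (intro dil_local) auto
      qed (use rP disj \<rho>0 in auto)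
      finally have "real (card ?S) * (\<rho> / 2) ^ CARD('n) \<le> ((2^k + 1) * \<rho>) ^ CARD('n)" .
      then have "real (card ?S) \<le> ((2^k + 1) * \<rho>) ^ CARD('n) / (\<rho> / 2) ^ CARD('n)"
        using \<rho>0 by (simp add: field_simps)
      also have "\<dots> = (((2^k + 1) * \<rho>) / (\<rho> / 2)) ^ CARD('n)"
        by (rule power_divide[symmetric])
      also have "\<dots> = (2 * (2^k + 1)) ^ CARD('n)"
      proof -
        have "((2^k + 1) * \<rho>) / (\<rho> / 2) = 2 * (2^k + 1)" using \<rho>0 by (simp add: field_simps)
        then show ?thesis by simp
      qed
      also have "\<dots> \<le> (2 ^ (k + 2)) ^ CARD('n)"
        by (intro power_mono) auto
      also have "\<dots> = N" unfolding N_def by (simp only: power_mult)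
      finally show ?thesis using e xin by simp
    qed
  qed
  have N0: "0 \<le> N" by (simp add: N_def)
  have sumI: "(\<Sum>P\<in>G. Iv h s (dil (fst P) (snd P) k)) \<le> N * J"
    unfolding J_def
    by (rule Iv_sum_le[OF h_nonneg h_meas h_loc fG _ _ N0 pw fin_dil[OF h_nonneg h_meas h_loc]]) auto
  have p0: "0 < p" using q0 s0 by (simp add: p_def)
  have d0: "0 \<le> d" by (simp add: d_def)
  have J0: "0 \<le> J" by (simp add: J_def)
  define X1 where "X1 = real k * (q - q * n / s)"
  have "(\<Sum>P\<in>G. Ak h s (fst P) (snd P) k powr q * (snd P) ^ CARD('n))
      = (\<Sum>P\<in>G. 2 powr X1 * snd P powr \<nu> * Iv h s (dil (fst P) (snd P) k) powr p)"
    using rP by (intro sum.cong refl) (simp add: Ak_pow s0 q0 X1_def n_def \<nu>_def p_def)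
  also have "\<dots> \<le> (\<Sum>P\<in>G. 2 powr X1 * \<rho> powr \<nu> * Iv h s (dil (fst P) (snd P) k) powr p)"
    using rP nu0 by (intro sum_mono mult_right_mono mult_left_mono powr_mono2) (auto simp: \<nu>_def n_def less_imp_le)
  also have "\<dots> = 2 powr X1 * \<rho> powr \<nu> * (\<Sum>P\<in>G. Iv h s (dil (fst P) (snd P) k) powr p)"
    by (simp add: sum_distrib_left)
  also have "\<dots> \<le> 2 powr X1 * \<rho> powr \<nu> * (real (card G) powr d * (\<Sum>P\<in>G. Iv h s (dil (fst P) (snd P) k)) powr p)"
  proof (intro mult_left_mono)
    show "(\<Sum>P\<in>G. Iv h s (dil (fst P) (snd P) k) powr p) \<le> real (card G) powr d * (\<Sum>P\<in>G. Iv h s (dil (fst P) (snd P) k)) powr p"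
      using sum_pow_card[OF fG _ p0, of "\<lambda>P. Iv h s (dil (fst P) (snd P) k)"] by (simp add: d_def p_def)
  qed auto
  also have "\<dots> \<le> 2 powr X1 * \<rho> powr \<nu> * ((2 powr (real (m + 1) * n)) powr d * (N * J) powr p)"
  proof (intro mult_left_mono mult_mono powr_mono2)
    show "real (card G) \<le> 2 powr (real (m + 1) * n)" by (rule cardG)
    show "(\<Sum>P\<in>G. Iv h s (dil (fst P) (snd P) k)) \<le> N * J" by (rule sumI)
  qed (use d0 p0 N0 J0 in \<open>auto intro: sum_nonneg\<close>)
  also have "\<dots> = 2 powr (X1 + (- (real m * \<nu>)) + real (m + 1) * n * d + real (k + 2) * n * p) * l powr \<nu> * J powr p"
  proof -
    have e1: "\<rho> powr \<nu> = l powr \<nu> * 2 powr (- (real m * \<nu>))"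
    proof -
      have "\<rho> = l / 2 powr real m" by (simp add: \<rho>_def powr_realpow)
      then have "\<rho> powr \<nu> = l powr \<nu> / (2 powr real m) powr \<nu>" using l0 by (simp add: powr_divide)
      also have "\<dots> = l powr \<nu> / 2 powr (real m * \<nu>)" by (simp add: powr_powr)
      also have "\<dots> = l powr \<nu> * 2 powr (- (real m * \<nu>))" by (simp add: powr_minus divide_inverse)
      finally show ?thesis .
    qed
    have e2: "N powr p = 2 powr (real (k + 2) * n * p)"
      unfolding N_def n_def by (simp add: powr_realpow[symmetric] powr_powr algebra_simps)
    have e3: "(2 powr (real (m + 1) * n)) powr d = 2 powr (real (m + 1) * n * d)"
      by (simp add: powr_powr)
    have e4: "(N * J) powr p = N powr p * J powr p" using N0 J0 by (simp add: powr_mult)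
    show ?thesis unfolding e1 e2 e3 e4 powr_add by (simp only: mult_ac)
  qed
  also have "X1 + (- (real m * \<nu>)) + real (m + 1) * n * d + real (k + 2) * n * p
      = (real k * q + 2 * n * (q/s) + n * d) + (- (real m * (\<nu> - n * d)))"
    using s0 by (simp add: X1_def p_def field_simps)
  finally show ?thesis
    unfolding p_def n_def \<nu>_def d_def J_def powr_add by (simp only: mult_ac)
qed


lemma local_k:
  fixes a :: "real^'n" and h :: "real^'n \<Rightarrow> real"
  assumes h_nonneg: "\<And>x. 0 \<le> h x"
    and h_meas: "h \<in> borel_measurable lebesgue"
    and h_loc: "\<And>K. compact K \<Longrightarrow> set_integrable lebesgue K (\<lambda>x. h x powr s)"
    and s0: "0 < s" and q0: "0 < q" and nu0: "0 < real CARD('n) + q - q * real CARD('n) / s"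
    and l0: "0 < l" and fF: "finite F"
    and Fsub: "\<And>P. P \<in> F \<Longrightarrow> 0 < snd P \<and> cube (fst P) (snd P) \<subseteq> cube a l"
    and disj: "\<And>P P'. P \<in> F \<Longrightarrow> P' \<in> F \<Longrightarrow> P \<noteq> P' \<Longrightarrow> cube (fst P) (snd P) \<inter> cube (fst P') (snd P') = {}"
  shows "(\<Sum>P\<in>{P\<in>F. k \<le> mP l (snd P)}. Ak h s (fst P) (snd P) k powr q * (snd P) ^ CARD('n))
    \<le> (2 powr (2 * real CARD('n) * (q/s) + real CARD('n) * max (1 - q/s) 0 - (q - q * real CARD('n) / s))
         / (1 - 2 powr (- (real CARD('n) + q - q * real CARD('n) / s - real CARD('n) * max (1 - q/s) 0))))
       * 2 powr (real k * q * real CARD('n) * max (1/s - 1/q) 0) * Ak h s a l 1 powr q * l ^ CARD('n)"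
proof -
  define n where "n = real CARD('n)"
  define \<nu> where "\<nu> = n + q - q * n / s"
  define d where "d = max (1 - q/s) 0"
  define \<mu> where "\<mu> = \<nu> - n * d"
  define p where "p = q / s"
  define J where "J = Iv h s (dil a l 1)"
  define S where "S = {P\<in>F. k \<le> mP l (snd P)}"
  define M where "M = (\<Sum>P\<in>F. mP l (snd P))"
  define f where "f P = Ak h s (fst P) (snd P) k powr q * (snd P) ^ CARD('n)" for P
  define x where "x = 2 powr (- \<mu>)"
  have \<mu>0: "0 < \<mu>"
  proof (cases "q \<le> s")
    case True then have "\<mu> = q" using s0 by (simp add: \<mu>_def \<nu>_def d_def field_simps)
    then show ?thesis using q0 by simp
  next
    case False then have "\<mu> = \<nu>" using s0 by (simp add: \<mu>_def \<nu>_def d_def field_simps)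
    then show ?thesis using nu0 by (simp add: \<nu>_def n_def)
  qed
  have x0: "0 \<le> x" "x < 1" using \<mu>0 by (auto simp: x_def intro: powr_less_one)
  have fS: "finite S" using fF by (simp add: S_def)
  have img: "(\<lambda>P. mP l (snd P)) ` S \<subseteq> {k..M}"
  proof
    fix m assume "m \<in> (\<lambda>P. mP l (snd P)) ` S"
    then obtain P where P: "P \<in> S" "m = mP l (snd P)" by auto
    have "mP l (snd P) \<le> M" unfolding M_def using P fF by (intro member_le_sum) (auto simp: S_def)
    then show "m \<in> {k..M}" using P by (auto simp: S_def)
  qed
  have "(\<Sum>P\<in>S. f P) = (\<Sum>m\<in>{k..M}. \<Sum>P\<in>{P\<in>S. mP l (snd P) = m}. f P)"
    by (rule sum.group[OF fS _ img, symmetric]) simp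
  also have "\<dots> \<le> (\<Sum>m\<in>{k..M}. 2 powr (real k * q + 2 * n * p + n * d) * 2 powr (- (real m * \<mu>)) * l powr \<nu> * J powr p)"
  proof (rule sum_mono)
    fix m assume m: "m \<in> {k..M}"
    show "(\<Sum>P\<in>{P\<in>S. mP l (snd P) = m}. f P) \<le> 2 powr (real k * q + 2 * n * p + n * d) * 2 powr (- (real m * \<mu>)) * l powr \<nu> * J powr p"
      unfolding f_def n_def p_def d_def \<mu>_def \<nu>_def J_def
      by (rule group_bound[OF h_nonneg h_meas h_loc s0 q0 _ l0])
         (use nu0 fF Fsub disj m in \<open>auto simp: S_def\<close>)
  qed
  also have "\<dots> = (\<Sum>m\<in>{k..M}. (2 powr (real k * q + 2 * n * p + n * d) * l powr \<nu> * J powr p) * x ^ m)"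
  proof (intro sum.cong refl)
    fix m
    have xm: "x ^ m = 2 powr (- (real m * \<mu>))" by (simp add: x_def powr_realpow[symmetric] powr_powr mult.commute)
    show "2 powr (real k * q + 2 * n * p + n * d) * 2 powr (- (real m * \<mu>)) * l powr \<nu> * J powr p =
         (2 powr (real k * q + 2 * n * p + n * d) * l powr \<nu> * J powr p) * x ^ m"
      unfolding xm by (simp only: mult_ac)
  qed
  also have "\<dots> = 2 powr (real k * q + 2 * n * p + n * d) * l powr \<nu> * J powr p * (\<Sum>m\<in>{k..M}. x ^ m)"
    by (rule sum_distrib_left[symmetric])
  also have "\<dots> \<le> 2 powr (real k * q + 2 * n * p + n * d) * l powr \<nu> * J powr p * (x ^ k / (1 - x))"
    by (intro mult_left_mono geom_le x0) auto
  also have "\<dots> = (2 powr (2 * n * p + n * d) / (1 - x)) * 2 powr (real k * (q - \<mu>)) * (l powr \<nu> * J powr p)"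
    by (simp add: x_def powr_realpow[symmetric] powr_powr powr_add[symmetric] algebra_simps)
  also have "l powr \<nu> * J powr p = 2 powr (- (q - q * n / s)) * (Ak h s a l 1 powr q * l ^ CARD('n))"
    using Ak_pow[OF l0 s0 q0, of h a 1]
    by (simp add: n_def \<nu>_def p_def J_def powr_minus powr_add[symmetric])
  also have "real k * (q - \<mu>) = real k * q * n * max (1/s - 1/q) 0"
  proof -
    have "q - \<mu> = n * (q/s - 1 + d)" by (simp add: \<mu>_def \<nu>_def algebra_simps)
    also have "q/s - 1 + d = q * max (1/s - 1/q) 0"
      using q0 s0 by (auto simp: d_def max_def field_simps)
    finally show ?thesis by (simp add: mult_ac)
  qed
  finally have fin: "(\<Sum>P\<in>S. f P) \<le> 2 powr (2 * n * p + n * d) / (1 - x) * 2 powr (real k * q * n * max (1 / s - 1 / q) 0) *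
    (2 powr - (q - q * n / s) * (Ak h s a l 1 powr q * l ^ CARD('n)))" .
  have eq: "2 powr (2 * n * p + n * d) / (1 - x) * 2 powr (real k * q * n * max (1 / s - 1 / q) 0) *
    (2 powr - (q - q * n / s) * (Ak h s a l 1 powr q * l ^ CARD('n)))
    = (2 powr (2 * n * p + n * d - (q - q * n / s)) / (1 - x)) * 2 powr (real k * q * n * max (1 / s - 1 / q) 0)
       * Ak h s a l 1 powr q * l ^ CARD('n)"
    by (simp add: powr_diff powr_minus divide_inverse mult_ac)
  show ?thesis using fin[unfolded eq] unfolding S_def f_def x_def \<mu>_def \<nu>_def d_def p_def n_def .
qed


lemma large_term:
  fixes a b :: "real^'n" and h :: "real^'n \<Rightarrow> real"
  assumes h_nonneg: "\<And>x. 0 \<le> h x"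
    and h_meas: "h \<in> borel_measurable lebesgue"
    and h_loc: "\<And>K. compact K \<Longrightarrow> set_integrable lebesgue K (\<lambda>x. h x powr s)"
    and s0: "0 < s" and sn: "s < real CARD('n)"
    and r0: "0 < r" and sub: "cube b r \<subseteq> cube a l" and km: "mP l r + 1 \<le> k"
  shows "Ak h s b r k \<le> 4 powr (real CARD('n) / s - 1) * Ak h s a l (k - mP l r + 1)"
proof -
  define m where "m = mP l r"
  define j where "j = k - m + 1"
  define n where "n = real CARD('n)"
  have rl: "r \<le> l"
  proof -
    have "a $ undefined \<le> b $ undefined \<and> b $ undefined + r \<le> a $ undefined + l"
      using sub r0 by (intro cube_coords) auto
    then show ?thesis by linarith
  qed
  have l0: "0 < l" using r0 rl by simp
  have m1: "2 ^ m * r \<le> l" and m2: "l < 2 ^ Suc m * r" using mP[OF r0 rl] by (auto simp: m_def)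
  have kj: "k = (j - 2) + (m + 1)" "(j - 1) = k - m" "2 \<le> j" using km by (auto simp: j_def m_def)
  have up: "2 ^ k * r \<le> 2 ^ (j - 1) * l"
  proof -
    have "2 ^ k * r = 2 ^ (k - m) * (2 ^ m * r)" using km by (simp add: m_def power_add[symmetric])
    also have "\<dots> \<le> 2 ^ (k - m) * l" using m1 by (intro mult_left_mono) auto
    finally show ?thesis using kj by simp
  qed
  have low: "2 ^ (j - 2) * l \<le> 2 ^ k * r"
  proof -
    have "2 ^ (j - 2) * l \<le> 2 ^ (j - 2) * (2 ^ Suc m * r)" using m2 by (intro mult_left_mono) auto
    also have "\<dots> = 2 ^ k * r" using kj(1) by (simp add: power_add)
    finally show ?thesis .
  qed
  have II: "Iv h s (dil b r k) \<le> Iv h s (dil a l j)"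
  proof (rule Iv_mono[OF h_nonneg h_meas h_loc _ fin_dil[OF h_nonneg h_meas h_loc]])
    show "dil b r k \<subseteq> dil a l j"
    proof (rule dil_mono[OF sub r0])
      have "(2 ^ k - 1) * r \<le> 2 ^ k * r" using r0 by simp
      also have "\<dots> \<le> 2 ^ (j - 1) * l" by (rule up)
      also have "\<dots> \<le> (2 ^ j - 1) * l"
      proof (rule mult_right_mono)
        have "(2::real) ^ j = 2 * 2 ^ (j - 1)" using kj(3) by (simp add: power_Suc[symmetric])
        moreover have "(1::real) \<le> 2 ^ (j - 1)" by simp
        ultimately show "(2::real) ^ (j - 1) \<le> 2 ^ j - 1" by linarith
      qed (use l0 in auto)
      finally show "(2 ^ k - 1) * r \<le> (2 ^ j - 1) * l" .
    qed
  qed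
  have X: "(2 ^ k * r) powr (1 - n / s) \<le> (2 ^ (j - 2) * l) powr (1 - n / s)"
    using low l0 sn s0 by (intro powr_mono2') (auto simp: n_def field_simps)
  have Y: "(2 ^ (j - 2) * l) powr (1 - n / s) = 4 powr (n / s - 1) * (2 ^ j * l) powr (1 - n / s)"
  proof -
    have e: "2 ^ (j - 2) * l = (2 ^ j * l) / 4"
      using kj(3) by (simp add: power_diff)
    have "(2 ^ (j - 2) * l) powr (1 - n / s) = ((2 ^ j * l) / 4) powr (1 - n / s)" by (simp only: e)
    also have "\<dots> = (2 ^ j * l) powr (1 - n / s) / 4 powr (1 - n / s)"
      using l0 by (intro powr_divide)
    also have "\<dots> = 4 powr (n / s - 1) * (2 ^ j * l) powr (1 - n / s)"
      by (simp add: powr_minus_divide[symmetric] powr_diff field_simps)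
    finally show ?thesis .
  qed
  have "Ak h s b r k = (2 ^ k * r) powr (1 - n / s) * Iv h s (dil b r k) powr (1 / s)"
    by (simp add: Ak_def n_def)
  also have "\<dots> \<le> (2 ^ (j - 2) * l) powr (1 - n / s) * Iv h s (dil a l j) powr (1 / s)"
    by (rule mult_mono[OF X powr_mono2]) (use II s0 in auto)
  also have "\<dots> = 4 powr (n / s - 1) * Ak h s a l j"
    unfolding Y by (simp add: Ak_def n_def)
  finally show ?thesis by (simp add: n_def j_def m_def)
qed


lemma ennreal_term_le_suminf: "f t \<le> (\<Sum>i. f i :: ennreal)"
  using sum_le_suminf[of f "{t}"] by (auto intro: summableI)

lemma gbar_lower:
  assumes "1 \<le> j" "\<And>k. 0 \<le> \<gamma> k" "0 \<le> e" "e = max (1/s - 1/q) 0"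
  shows "ennreal (2 powr (- real j * real n * e) * (\<gamma> (t + (j - 1)) * 2 powr (real (t + (j - 1)) * real n * e)))
     \<le> gbar C n s q \<gamma> j"
proof -
  have "ennreal (2 powr (- real j * real n * e) * (\<gamma> (t + (j - 1)) * 2 powr (real (t + (j - 1)) * real n * e)))
     = ennreal (2 powr (- real j * real n * e)) * ennreal (\<gamma> (t + (j - 1)) * 2 powr (real (t + (j - 1)) * real n * e))"
    using assms(2) by (simp add: ennreal_mult)
  also have "\<dots> \<le> ennreal (2 powr (- real j * real n * e)) *
      (\<Sum>i. ennreal (\<gamma> (i + (j - 1)) * 2 powr (real (i + (j - 1)) * real n * e)))"
    by (intro mult_left_mono ennreal_term_le_suminf) auto
  also have "\<dots> = gbar C n s q \<gamma> j"
    using assms(1) by (simp add: gbar_def assms(4))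
  finally show ?thesis .
qed


lemma aQ_split:
  fixes a b :: "real^'n" and h :: "real^'n \<Rightarrow> real"
  assumes h_nonneg: "\<And>x. 0 \<le> h x"
    and h_meas: "h \<in> borel_measurable lebesgue"
    and h_loc: "\<And>K. compact K \<Longrightarrow> set_integrable lebesgue K (\<lambda>x. h x powr s)"
    and s0: "0 < s" and sn: "s < real CARD('n)" and \<gamma>0: "\<And>k. 0 \<le> \<gamma> k"
    and r0: "0 < r" and sub: "cube b r \<subseteq> cube a l"
  shows "aQ (\<lambda>k. ennreal (\<gamma> k)) h s b r \<le> ennreal (\<Sum>k\<in>{..mP l r}. \<gamma> k * Ak h s b r k)
     + ennreal (4 powr (real CARD('n) / s - 1) * 2 powr (real CARD('n) * max (1/s - 1/q) 0))
       * aQ (gbar C CARD('n) s q \<gamma>) h s a l"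
proof -
  define m where "m = mP l r"
  define e where "e = max (1/s - 1/q) (0::real)"
  define n where "n = real CARD('n)"
  define c where "c = 4 powr (n / s - 1) * 2 powr (n * e)"
  have e0: "0 \<le> e" by (simp add: e_def)
  have rl: "r \<le> l"
  proof -
    have "a $ undefined \<le> b $ undefined \<and> b $ undefined + r \<le> a $ undefined + l"
      using sub r0 by (intro cube_coords) auto
    then show ?thesis by linarith
  qed
  have l0: "0 < l" using r0 rl by simp
  define f where "f k = ennreal (\<gamma> k) * ennreal (Ak h s b r k)" for k
  define T where "T j = gbar C CARD('n) s q \<gamma> j * ennreal (Ak h s a l j)" for j
  have aP: "aQ (\<lambda>k. ennreal (\<gamma> k)) h s b r = (\<Sum>k. f k)"
    unfolding f_def by (rule aQ_eq[OF r0 s0 h_meas h_nonneg])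
  have aQ': "aQ (gbar C CARD('n) s q \<gamma>) h s a l = (\<Sum>j. T j)"
    unfolding T_def by (rule aQ_eq[OF l0 s0 h_meas h_nonneg])
  have split: "(\<Sum>k. f k) = (\<Sum>i. f (i + (m + 1))) + (\<Sum>k<m + 1. f k)"
    by (rule suminf_offset) (auto intro: summableI)
  have fin: "(\<Sum>k<m + 1. f k) = ennreal (\<Sum>k\<in>{..m}. \<gamma> k * Ak h s b r k)"
  proof -
    have "(\<Sum>k<m + 1. f k) = (\<Sum>k\<in>{..m}. ennreal (\<gamma> k * Ak h s b r k))"
      unfolding f_def using \<gamma>0 by (intro sum.cong) (auto simp: ennreal_mult)
    also have "\<dots> = ennreal (\<Sum>k\<in>{..m}. \<gamma> k * Ak h s b r k)"
      using \<gamma>0 by (intro sum_ennreal) auto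
    finally show ?thesis .
  qed
  have tm: "f (i + (m + 1)) \<le> ennreal c * T (i + 2)" for i
  proof -
    define k where "k = i + (m + 1)"
    define j where "j = i + 2"
    have jk: "j = k - mP l r + 1" "mP l r + 1 \<le> k" by (auto simp: j_def k_def m_def)
    have "f k = ennreal (\<gamma> k * Ak h s b r k)" using \<gamma>0 by (simp add: f_def ennreal_mult)
    also have "\<dots> \<le> ennreal (\<gamma> k * (4 powr (n / s - 1) * Ak h s a l j))"
      unfolding jk(1) n_def
      by (intro ennreal_leI mult_left_mono large_term[OF h_nonneg h_meas h_loc s0 sn r0 sub jk(2)] \<gamma>0)
    also have "\<dots> = ennreal c * (ennreal (2 powr (- (n * e)) * \<gamma> k) * ennreal (Ak h s a l j))"
    proof -
      have "\<gamma> k * (4 powr (n / s - 1) * Ak h s a l j) = c * ((2 powr (- (n * e)) * \<gamma> k) * Ak h s a l j)"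
        by (simp add: c_def powr_minus field_simps)
      then have "ennreal (\<gamma> k * (4 powr (n / s - 1) * Ak h s a l j)) = ennreal (c * ((2 powr (- (n * e)) * \<gamma> k) * Ak h s a l j))"
        by (simp only:)
      also have "\<dots> = ennreal c * (ennreal (2 powr (- (n * e)) * \<gamma> k) * ennreal (Ak h s a l j))"
        using \<gamma>0 by (simp add: ennreal_mult c_def)
      finally show ?thesis .
    qed
    also have "\<dots> \<le> ennreal c * T j"
      unfolding T_def
    proof (intro mult_left_mono mult_right_mono order.refl)
      have "2 powr (- (n * e)) * \<gamma> k \<le> 2 powr (- real j * n * e) * (\<gamma> (m + (j - 1)) * 2 powr (real (m + (j - 1)) * n * e))"
      proof -
        have km: "m + (j - 1) = k" by (simp add: j_def k_def)
        have eqA: "2 powr (- real j * n * e) * (\<gamma> k * 2 powr (real k * n * e)) = \<gamma> k * 2 powr ((real k - real j) * n * e)"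
          by (simp add: powr_add[symmetric] algebra_simps)
        have mono: "2 powr (- (n * e)) \<le> 2 powr ((real k - real j) * n * e)"
        proof (rule powr_mono)
          have "real k - real j = real m - 1" by (simp add: j_def k_def)
          then have "(real k - real j) * n * e = (real m - 1) * n * e" by simp
          then have "(real k - real j) * n * e = real m * (n * e) - n * e" by (simp add: algebra_simps)
          moreover have "0 \<le> real m * (n * e)" using e0 by (simp add: n_def)
          ultimately show "- (n * e) \<le> (real k - real j) * n * e" by linarith
        qed simp
        have "2 powr (- (n * e)) * \<gamma> k \<le> \<gamma> k * 2 powr ((real k - real j) * n * e)"
          using mult_left_mono[OF mono \<gamma>0[of k]] by (simp add: mult.commute)
        also have "\<dots> = 2 powr (- real j * n * e) * (\<gamma> k * 2 powr (real k * n * e))" by (rule eqA[symmetric])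
        finally show ?thesis unfolding km .
      qed
      then show "ennreal (2 powr (- (n * e)) * \<gamma> k) \<le> gbar C CARD('n) s q \<gamma> j"
        using gbar_lower[where j=j and \<gamma>=\<gamma> and e=e and s=s and q=q and C=C and n="CARD('n)" and t=m] \<gamma>0 e0 by (auto simp: j_def e_def n_def intro: order.trans ennreal_leI)
    qed auto
    finally show ?thesis by (simp add: k_def j_def)
  qed
  have "(\<Sum>i. f (i + (m + 1))) \<le> (\<Sum>i. ennreal c * T (i + 2))"
    by (intro suminf_le tm) (auto intro: summableI)
  also have "\<dots> = ennreal c * (\<Sum>i. T (i + 2))" by simp
  also have "\<dots> \<le> ennreal c * (\<Sum>j. T j)"
  proof (intro mult_left_mono)
    have "(\<Sum>j. T j) = (\<Sum>i. T (i + 2)) + (\<Sum>j<2. T j)"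
      by (rule suminf_offset) (auto intro: summableI)
    then show "(\<Sum>i. T (i + 2)) \<le> (\<Sum>j. T j)" by simp
  qed auto
  finally have big: "(\<Sum>i. f (i + (m + 1))) \<le> ennreal c * (\<Sum>j. T j)" .
  show ?thesis
    unfolding aP aQ' split fin
    using big by (simp add: add.commute add_left_mono c_def n_def e_def m_def)
qed


lemma epow_ennreal: "0 \<le> y \<Longrightarrow> epow (ennreal y) q = ennreal (y powr q)"
  by (simp add: epow_def)

lemma epow_le:
  assumes "x \<le> ennreal y" "0 \<le> y" "0 < q"
  shows "epow x q \<le> ennreal (y powr q)"
proof (cases x rule: ennreal_cases)
  case (real r)
  then have "r \<le> y" using assms by simp
  then show ?thesis using real assms by (simp add: epow_def powr_mono2 ennreal_leI)
next
  case top then show ?thesis using assms(1) by (simp add: top_unique)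
qed

lemma two_point:
  fixes x y q :: real
  assumes "0 \<le> x" "0 \<le> y" "1 \<le> q"
  shows "(x + y) powr q \<le> 2 powr q * (x powr q + y powr q)"
proof -
  have "(x + y) powr q \<le> (2 * max x y) powr q"
    using assms by (intro powr_mono2) auto
  also have "\<dots> = 2 powr q * max x y powr q" using assms by (simp add: powr_mult)
  also have "max x y powr q \<le> x powr q + y powr q"
    by (cases "x \<le> y") (auto simp: max_def)
  then have "2 powr q * max x y powr q \<le> 2 powr q * (x powr q + y powr q)"
    by (intro mult_left_mono) auto
  finally show ?thesis .
qed


definition K1c :: "real \<Rightarrow> real \<Rightarrow> real \<Rightarrow> real" where
  "K1c n s q = 2 powr (2 * n * (q/s) + n * max (1 - q/s) 0 - (q - q * n / s))
         / (1 - 2 powr (- (n + q - q * n / s - n * max (1 - q/s) 0)))"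
definition c2c :: "real \<Rightarrow> real \<Rightarrow> real \<Rightarrow> real" where
  "c2c n s q = 4 powr (n / s - 1) * 2 powr (n * max (1/s - 1/q) 0)"
lemma K1c_nonneg:
  assumes "0 < s" "0 < q" "0 < n + q - q * n / s"
  shows "0 \<le> K1c n s q"
proof -
  define \<mu> where "\<mu> = n + q - q * n / s - n * max (1 - q/s) 0"
  have \<mu>0: "0 < \<mu>"
  proof (cases "q \<le> s")
    case True then have "\<mu> = q" using assms by (simp add: \<mu>_def field_simps)
    then show ?thesis using assms by simp
  next
    case False then have "\<mu> = n + q - q * n / s" using assms by (simp add: \<mu>_def field_simps)
    then show ?thesis using assms by simp
  qed
  have "2 powr (- \<mu>) < 1" using \<mu>0 by (auto intro: powr_less_one)
  then show ?thesis unfolding K1c_def \<mu>_def[symmetric] by simp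
qed

definition Kc :: "real \<Rightarrow> real \<Rightarrow> real \<Rightarrow> real" where
  "Kc n s q = max 1 (2 powr q * (K1c n s q * 2 powr (q * (n * max (1/s - 1/q) 0)) + c2c n s q powr q))"

lemma small_sum:
  fixes a :: "real^'n" and h :: "real^'n \<Rightarrow> real"
  assumes h_nonneg: "\<And>x. 0 \<le> h x"
    and h_meas: "h \<in> borel_measurable lebesgue"
    and h_loc: "\<And>K. compact K \<Longrightarrow> set_integrable lebesgue K (\<lambda>x. h x powr s)"
    and s0: "0 < s" and q1: "1 \<le> q" and nu0: "0 < real CARD('n) + q - q * real CARD('n) / s"
    and \<gamma>0: "\<And>k. 0 \<le> \<gamma> k"
    and l0: "0 < l" and fF: "finite F"
    and Fsub: "\<And>P. P \<in> F \<Longrightarrow> 0 < snd P \<and> cube (fst P) (snd P) \<subseteq> cube a l"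
    and disj: "\<And>P P'. P \<in> F \<Longrightarrow> P' \<in> F \<Longrightarrow> P \<noteq> P' \<Longrightarrow> cube (fst P) (snd P) \<inter> cube (fst P') (snd P') = {}"
    and fin: "aQ (gbar C CARD('n) s q \<gamma>) h s a l = ennreal A" and A0: "0 \<le> A"
  shows "(\<Sum>P\<in>F. (\<Sum>k\<in>{..mP l (snd P)}. \<gamma> k * Ak h s (fst P) (snd P) k) powr q * (snd P) ^ CARD('n))
     \<le> K1c (real CARD('n)) s q * (2 powr (real CARD('n) * max (1/s - 1/q) 0) * A) powr q * l ^ CARD('n)"
proof -
  define n where "n = real CARD('n)"
  define e where "e = max (1/s - 1/q) (0::real)"
  define M where "M = (\<Sum>P\<in>F. mP l (snd P))"
  define w where "w k = \<gamma> k * 2 powr (real k * n * e)" for k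
  define W where "W = (\<Sum>k\<in>{..M}. w k)"
  define y where "y P k = 2 powr (- (real k * n * e)) * Ak h s (fst P) (snd P) k" for P k
  define A1 where "A1 = Ak h s a l 1"
  have q0: "0 < q" using q1 by simp
  have w0: "0 \<le> w k" for k using \<gamma>0 by (simp add: w_def)
  have y0: "0 \<le> y P k" for P k by (simp add: y_def)
  have W0: "0 \<le> W" unfolding W_def using w0 by (intro sum_nonneg) auto
  have A1_0: "0 \<le> A1" by (simp add: A1_def)
  have mM: "mP l (snd P) \<le> M" if "P \<in> F" for P
    unfolding M_def using that fF by (intro member_le_sum) auto
  have WA: "W * A1 \<le> 2 powr (n * e) * A"
  proof -
    have "ennreal (2 powr (- (n * e)) * W) \<le> gbar C CARD('n) s q \<gamma> 1"
    proof -
      have "ennreal (2 powr (- (n * e)) * W) = ennreal (2 powr (- (n * e))) * (\<Sum>k\<in>{..M}. ennreal (w k))"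
        using W0 w0 by (simp add: ennreal_mult W_def sum_ennreal)
      also have "\<dots> \<le> ennreal (2 powr (- (n * e))) * (\<Sum>t. ennreal (\<gamma> (t + (1 - 1)) * 2 powr (real (t + (1 - 1)) * real CARD('n) * e)))"
        by (intro mult_left_mono) (auto intro!: sum_le_suminf summableI simp: w_def n_def)
      also have "\<dots> = gbar C CARD('n) s q \<gamma> 1"
        by (simp add: gbar_def e_def n_def)
      finally show ?thesis .
    qed
    then have "ennreal (2 powr (- (n * e)) * W) * ennreal A1 \<le> gbar C CARD('n) s q \<gamma> 1 * ennreal A1"
      by (intro mult_right_mono) auto
    also have "\<dots> \<le> aQ (gbar C CARD('n) s q \<gamma>) h s a l"
      unfolding aQ_eq[OF l0 s0 h_meas h_nonneg] A1_def by (rule ennreal_term_le_suminf)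
    finally have "ennreal (2 powr (- (n * e)) * W * A1) \<le> ennreal A"
      using fin W0 A1_0 by (simp add: ennreal_mult)
    then have "2 powr (- (n * e)) * W * A1 \<le> A"
      using A0 by (simp add: ennreal_le_iff)
    then have "2 powr (n * e) * (2 powr (- (n * e)) * W * A1) \<le> 2 powr (n * e) * A"
      by (intro mult_left_mono) auto
    then show ?thesis by (simp add: powr_minus field_simps)
  qed
  define K1 where "K1 = K1c n s q"
  have K1_0: "0 \<le> K1" unfolding K1_def n_def by (rule K1c_nonneg[OF s0 q0 nu0])
  have per: "(\<Sum>k\<in>{..mP l (snd P)}. \<gamma> k * Ak h s (fst P) (snd P) k) powr q
      \<le> W powr (q - 1) * (\<Sum>k\<in>{..mP l (snd P)}. w k * y P k powr q)" if P: "P \<in> F" for P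
  proof -
    have "(\<Sum>k\<in>{..mP l (snd P)}. \<gamma> k * Ak h s (fst P) (snd P) k) = (\<Sum>k\<in>{..mP l (snd P)}. w k * y P k)"
    proof (intro sum.cong refl)
      fix k
      have "2 powr (real k * n * e) * 2 powr (- (real k * n * e)) = 1" by (simp add: powr_add[symmetric])
      then show "\<gamma> k * Ak h s (fst P) (snd P) k = w k * y P k"
        unfolding w_def y_def by (metis (no_types, lifting) mult.assoc mult.left_commute mult_1_right)
    qed
    also have "(\<Sum>k\<in>{..mP l (snd P)}. w k * y P k) powr q
       \<le> (\<Sum>k\<in>{..mP l (snd P)}. w k) powr (q - 1) * (\<Sum>k\<in>{..mP l (snd P)}. w k * y P k powr q)"
      by (rule jensen) (use w0 y0 q1 in auto)
    also have "\<dots> \<le> W powr (q - 1) * (\<Sum>k\<in>{..mP l (snd P)}. w k * y P k powr q)"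
    proof (intro mult_right_mono powr_mono2)
      show "(\<Sum>k\<in>{..mP l (snd P)}. w k) \<le> W"
        unfolding W_def using mM[OF P] w0 by (intro sum_mono2) auto
    qed (use q1 w0 y0 in \<open>auto intro!: sum_nonneg mult_nonneg_nonneg\<close>)
    finally show ?thesis .
  qed
  have yq: "y P k powr q = 2 powr (- (real k * q * n * e)) * Ak h s (fst P) (snd P) k powr q" for P k
    by (simp add: y_def powr_mult powr_powr mult_ac)
  have "(\<Sum>P\<in>F. (\<Sum>k\<in>{..mP l (snd P)}. \<gamma> k * Ak h s (fst P) (snd P) k) powr q * (snd P) ^ CARD('n))
     \<le> (\<Sum>P\<in>F. W powr (q - 1) * (\<Sum>k\<in>{..mP l (snd P)}. w k * y P k powr q) * (snd P) ^ CARD('n))"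
    using per Fsub by (intro sum_mono mult_right_mono) (auto simp: less_imp_le)
  also have "\<dots> = W powr (q - 1) * (\<Sum>P\<in>F. \<Sum>k\<in>{..M}. if k \<le> mP l (snd P) then w k * y P k powr q * (snd P) ^ CARD('n) else 0)"
  proof -
    have "(\<Sum>k\<in>{..mP l (snd P)}. w k * y P k powr q) * (snd P) ^ CARD('n)
        = (\<Sum>k\<in>{..M}. if k \<le> mP l (snd P) then w k * y P k powr q * (snd P) ^ CARD('n) else 0)" if "P \<in> F" for P
    proof -
      have "{k \<in> {..M}. k \<le> mP l (snd P)} = {..mP l (snd P)}" using mM[OF that] by auto
      then have "(\<Sum>k\<in>{..M}. if k \<le> mP l (snd P) then w k * y P k powr q * (snd P) ^ CARD('n) else 0)
          = (\<Sum>k\<in>{..mP l (snd P)}. w k * y P k powr q * (snd P) ^ CARD('n))"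
        by (simp add: sum.inter_filter[symmetric])
      then show ?thesis by (simp add: sum_distrib_right)
    qed
    then have "(\<Sum>P\<in>F. (\<Sum>k\<in>{..mP l (snd P)}. w k * y P k powr q) * (snd P) ^ CARD('n))
      = (\<Sum>P\<in>F. \<Sum>k\<in>{..M}. if k \<le> mP l (snd P) then w k * y P k powr q * (snd P) ^ CARD('n) else 0)"
      by (intro sum.cong refl) auto
    moreover have "(\<Sum>P\<in>F. W powr (q - 1) * (\<Sum>k\<in>{..mP l (snd P)}. w k * y P k powr q) * (snd P) ^ CARD('n))
      = W powr (q - 1) * (\<Sum>P\<in>F. (\<Sum>k\<in>{..mP l (snd P)}. w k * y P k powr q) * (snd P) ^ CARD('n))"
      unfolding mult.assoc by (rule sum_distrib_left[symmetric])
    ultimately show ?thesis by simp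
  qed
  also have "\<dots> = W powr (q - 1) * (\<Sum>k\<in>{..M}. w k * (2 powr (- (real k * q * n * e)) *
        (\<Sum>P\<in>{P\<in>F. k \<le> mP l (snd P)}. Ak h s (fst P) (snd P) k powr q * (snd P) ^ CARD('n))))"
  proof -
    have "(\<Sum>P\<in>F. \<Sum>k\<in>{..M}. if k \<le> mP l (snd P) then w k * y P k powr q * (snd P) ^ CARD('n) else 0)
       = (\<Sum>k\<in>{..M}. \<Sum>P\<in>F. if k \<le> mP l (snd P) then w k * y P k powr q * (snd P) ^ CARD('n) else 0)"
      by (rule sum.swap)
    also have "\<dots> = (\<Sum>k\<in>{..M}. w k * (2 powr (- (real k * q * n * e)) *
        (\<Sum>P\<in>{P\<in>F. k \<le> mP l (snd P)}. Ak h s (fst P) (snd P) k powr q * (snd P) ^ CARD('n))))"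
    proof (intro sum.cong refl)
      fix k
      have "(\<Sum>P\<in>F. if k \<le> mP l (snd P) then w k * y P k powr q * (snd P) ^ CARD('n) else 0)
          = (\<Sum>P\<in>{P\<in>F. k \<le> mP l (snd P)}. w k * y P k powr q * (snd P) ^ CARD('n))"
        using fF by (simp add: sum.inter_filter)
      also have "\<dots> = (\<Sum>P\<in>{P\<in>F. k \<le> mP l (snd P)}. w k * (2 powr (- (real k * q * n * e)) * (Ak h s (fst P) (snd P) k powr q * (snd P) ^ CARD('n))))"
        by (intro sum.cong refl) (simp add: yq mult_ac)
      also have "\<dots> = w k * (2 powr (- (real k * q * n * e)) *
        (\<Sum>P\<in>{P\<in>F. k \<le> mP l (snd P)}. Ak h s (fst P) (snd P) k powr q * (snd P) ^ CARD('n)))"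
        by (simp add: sum_distrib_left)
      finally show "(\<Sum>P\<in>F. if k \<le> mP l (snd P) then w k * y P k powr q * (snd P) ^ CARD('n) else 0) = \<dots>" .
    qed
    finally show ?thesis by simp
  qed
  also have "\<dots> \<le> W powr (q - 1) * (\<Sum>k\<in>{..M}. w k * (K1 * A1 powr q * l ^ CARD('n)))"
  proof (rule mult_left_mono[OF sum_mono])
    fix k assume "k \<in> {..M}"
    have lk: "(\<Sum>P\<in>{P\<in>F. k \<le> mP l (snd P)}. Ak h s (fst P) (snd P) k powr q * (snd P) ^ CARD('n))
      \<le> K1 * 2 powr (real k * q * n * e) * A1 powr q * l ^ CARD('n)"
      unfolding K1_def K1c_def n_def e_def A1_def
      by (rule local_k[OF h_nonneg h_meas h_loc s0 q0 nu0 l0 fF Fsub disj])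
    have "2 powr (- (real k * q * n * e)) * (\<Sum>P\<in>{P\<in>F. k \<le> mP l (snd P)}. Ak h s (fst P) (snd P) k powr q * (snd P) ^ CARD('n))
      \<le> 2 powr (- (real k * q * n * e)) * (K1 * 2 powr (real k * q * n * e) * A1 powr q * l ^ CARD('n))"
      by (intro mult_left_mono lk) auto
    also have "\<dots> = K1 * A1 powr q * l ^ CARD('n)"
    proof -
      have "2 powr (- (real k * q * n * e)) * 2 powr (real k * q * n * e) = 1" by (simp add: powr_add[symmetric])
      then show ?thesis by (metis (no_types, lifting) mult.assoc mult.left_commute mult_1_left)
    qed
    finally show "w k * (2 powr (- (real k * q * n * e)) * (\<Sum>P\<in>{P\<in>F. k \<le> mP l (snd P)}. Ak h s (fst P) (snd P) k powr q * (snd P) ^ CARD('n)))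
      \<le> w k * (K1 * A1 powr q * l ^ CARD('n))" using w0 by (intro mult_left_mono) auto
  qed auto
  also have "\<dots> = W powr (q - 1) * (W * (K1 * A1 powr q * l ^ CARD('n)))"
    unfolding W_def by (simp only: sum_distrib_right[symmetric])
  also have "\<dots> = (W powr (q - 1) * W) * K1 * A1 powr q * l ^ CARD('n)"
    by (simp only: mult_ac)
  also have "W powr (q - 1) * W = W powr q"
  proof (cases "W = 0")
    case True then show ?thesis using q1 by simp
  next
    case False then show ?thesis using W0 by (simp add: powr_diff field_simps)
  qed
  also have "W powr q * K1 * A1 powr q * l ^ CARD('n) = K1 * (W * A1) powr q * l ^ CARD('n)"
    using W0 A1_0 by (simp add: powr_mult mult_ac)
  also have "\<dots> \<le> K1 * (2 powr (n * e) * A) powr q * l ^ CARD('n)"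
    using K1_0 WA W0 A1_0 l0 q0 by (intro mult_right_mono mult_left_mono powr_mono2) auto
  finally show ?thesis by (simp add: K1_def n_def e_def)
qed


lemma main_finite:
  fixes a :: "real^'n" and h :: "real^'n \<Rightarrow> real"
  assumes h_nonneg: "\<And>x. 0 \<le> h x"
    and h_meas: "h \<in> borel_measurable lebesgue"
    and h_loc: "\<And>K. compact K \<Longrightarrow> set_integrable lebesgue K (\<lambda>x. h x powr s)"
    and s0: "0 < s" and sn: "s < real CARD('n)" and q1: "1 \<le> q" and nu0: "0 < real CARD('n) + q - q * real CARD('n) / s"
    and \<gamma>0: "\<And>k. 0 \<le> \<gamma> k"
    and l0: "0 < l" and fF: "finite F"
    and Fsub: "\<And>P. P \<in> F \<Longrightarrow> 0 < snd P \<and> cube (fst P) (snd P) \<subseteq> cube a l"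
    and disj: "\<And>P P'. P \<in> F \<Longrightarrow> P' \<in> F \<Longrightarrow> P \<noteq> P' \<Longrightarrow> cube (fst P) (snd P) \<inter> cube (fst P') (snd P') = {}"
  shows "(\<Sum>P\<in>F. epow (aQ (\<lambda>k. ennreal (\<gamma> k)) h s (fst P) (snd P)) q * ennreal (measure lebesgue (cube (fst P) (snd P))))
     \<le> ennreal (Kc (real CARD('n)) s q) * epow (aQ (gbar C CARD('n) s q \<gamma>) h s a l) q * ennreal (measure lebesgue (cube a l))"
proof -
  define n where "n = real CARD('n)"
  define e where "e = max (1/s - 1/q) (0::real)"
  define c2 where "c2 = c2c n s q"
  define K1 where "K1 = K1c n s q"
  define ab where "ab = aQ (gbar C CARD('n) s q \<gamma>) h s a l"
  have q0: "0 < q" using q1 by simp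
  have Kc1: "1 \<le> Kc n s q" by (simp add: Kc_def)
  have mQ: "measure lebesgue (cube a l) = l ^ CARD('n)" using l0 by (simp add: measure_cube)
  have c2_0: "0 \<le> c2" by (simp add: c2_def c2c_def)
  have K1_0: "0 \<le> K1" unfolding K1_def n_def by (rule K1c_nonneg[OF s0 q0 nu0])
  show ?thesis
  proof (cases "ab = \<infinity>")
    case True
    have "ennreal (Kc n s q) * epow ab q * ennreal (measure lebesgue (cube a l)) = \<infinity>"
      using True Kc1 l0 by (simp add: epow_def mQ ennreal_mult_eq_top_iff)
    then show ?thesis by (simp add: ab_def n_def)
  next
    case False
    then obtain A where A: "ab = ennreal A" "0 \<le> A" by (cases ab rule: ennreal_cases) auto
    define \<sigma> where "\<sigma> P = (\<Sum>k\<in>{..mP l (snd P)}. \<gamma> k * Ak h s (fst P) (snd P) k)" for P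
    have \<sigma>0: "0 \<le> \<sigma> P" for P unfolding \<sigma>_def using \<gamma>0 by (intro sum_nonneg) auto
    have tP: "epow (aQ (\<lambda>k. ennreal (\<gamma> k)) h s (fst P) (snd P)) q * ennreal (measure lebesgue (cube (fst P) (snd P)))
        \<le> ennreal ((\<sigma> P + c2 * A) powr q * (snd P) ^ CARD('n))" if P: "P \<in> F" for P
    proof -
      have r0: "0 < snd P" and sub: "cube (fst P) (snd P) \<subseteq> cube a l" using Fsub[OF P] by auto
      have "aQ (\<lambda>k. ennreal (\<gamma> k)) h s (fst P) (snd P) \<le> ennreal (\<sigma> P) + ennreal c2 * ab"
        unfolding \<sigma>_def c2_def c2c_def n_def ab_def
        by (rule aQ_split[OF h_nonneg h_meas h_loc s0 sn \<gamma>0 r0 sub])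
      also have "\<dots> = ennreal (\<sigma> P + c2 * A)"
        using A \<sigma>0 c2_0 by (simp add: ennreal_mult ennreal_plus)
      finally have "epow (aQ (\<lambda>k. ennreal (\<gamma> k)) h s (fst P) (snd P)) q \<le> ennreal ((\<sigma> P + c2 * A) powr q)"
        by (rule epow_le) (use \<sigma>0 c2_0 A q0 in auto)
      moreover have "measure lebesgue (cube (fst P) (snd P)) = (snd P) ^ CARD('n)"
        using r0 by (simp add: measure_cube)
      ultimately show ?thesis using r0 by (simp add: ennreal_mult mult_right_mono)
    qed
    have "(\<Sum>P\<in>F. epow (aQ (\<lambda>k. ennreal (\<gamma> k)) h s (fst P) (snd P)) q * ennreal (measure lebesgue (cube (fst P) (snd P))))
        \<le> (\<Sum>P\<in>F. ennreal ((\<sigma> P + c2 * A) powr q * (snd P) ^ CARD('n)))"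
      using tP by (rule sum_mono)
    also have "\<dots> = ennreal (\<Sum>P\<in>F. (\<sigma> P + c2 * A) powr q * (snd P) ^ CARD('n))"
      using Fsub by (intro sum_ennreal) (auto simp: less_imp_le)
    also have "\<dots> \<le> ennreal (Kc n s q * A powr q * l ^ CARD('n))"
    proof (rule ennreal_leI)
      have "(\<Sum>P\<in>F. (\<sigma> P + c2 * A) powr q * (snd P) ^ CARD('n))
          \<le> (\<Sum>P\<in>F. 2 powr q * (\<sigma> P powr q + (c2 * A) powr q) * (snd P) ^ CARD('n))"
        using Fsub \<sigma>0 c2_0 A q1 by (intro sum_mono mult_right_mono two_point) (auto simp: less_imp_le)
      also have "\<dots> = 2 powr q * ((\<Sum>P\<in>F. \<sigma> P powr q * (snd P) ^ CARD('n)) + (c2 * A) powr q * (\<Sum>P\<in>F. (snd P) ^ CARD('n)))"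
        by (simp add: sum_distrib_left sum_distrib_right sum.distrib algebra_simps)
      also have "\<dots> \<le> 2 powr q * (K1 * (2 powr (n * e) * A) powr q * l ^ CARD('n) + (c2 * A) powr q * l ^ CARD('n))"
      proof (rule mult_left_mono[OF add_mono])
        show "(\<Sum>P\<in>F. \<sigma> P powr q * (snd P) ^ CARD('n)) \<le> K1 * (2 powr (n * e) * A) powr q * l ^ CARD('n)"
          unfolding \<sigma>_def K1_def n_def e_def
          by (rule small_sum[OF h_nonneg h_meas h_loc s0 q1 nu0 \<gamma>0 l0 fF Fsub disj A(1)[unfolded ab_def] A(2)])
        show "(c2 * A) powr q * (\<Sum>P\<in>F. (snd P) ^ CARD('n)) \<le> (c2 * A) powr q * l ^ CARD('n)"
          by (intro mult_left_mono count_le[OF fF]) (use Fsub disj l0 in auto)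
      qed auto
      also have "\<dots> = (2 powr q * (K1 * 2 powr (q * (n * e)) + c2 powr q)) * A powr q * l ^ CARD('n)"
        using A c2_0 by (simp add: powr_mult powr_powr algebra_simps)
      also have "\<dots> \<le> Kc n s q * A powr q * l ^ CARD('n)"
        using l0 A by (intro mult_right_mono) (auto simp: Kc_def K1_def c2_def e_def)
      finally show "(\<Sum>P\<in>F. (\<sigma> P + c2 * A) powr q * (snd P) ^ CARD('n)) \<le> Kc n s q * A powr q * l ^ CARD('n)" .
    qed
    also have "\<dots> = ennreal (Kc n s q) * epow ab q * ennreal (measure lebesgue (cube a l))"
      using A Kc1 l0 by (simp add: epow_ennreal mQ ennreal_mult)
    finally show ?thesis by (simp add: ab_def n_def)
  qed
qed


theorem mainTheorem11:
  fixes h :: "real^'n \<Rightarrow> real" and \<gamma> :: "nat \<Rightarrow> real" and s q :: real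
  assumes s1: "1 \<le> s" and sn: "s < real CARD('n)"
    and h_nonneg: "\<And>x. 0 \<le> h x"
    and h_meas: "h \<in> borel_measurable lebesgue"
    and h_loc: "\<And>K. compact K \<Longrightarrow> set_integrable lebesgue K (\<lambda>x. h x powr s)"
    and \<gamma>_nonneg: "\<And>k. 0 \<le> \<gamma> k"
    and q1: "1 \<le> q" and qs: "q < s * real CARD('n) / (real CARD('n) - s)"
  shows "\<exists>C>0. \<forall>a l F. 0 < l \<longrightarrow>
           (\<forall>P\<in>F. 0 < snd P \<and> cube (fst P) (snd P) \<subseteq> cube a l) \<longrightarrow>
           (\<forall>P\<in>F. \<forall>P'\<in>F. P \<noteq> P' \<longrightarrow> cube (fst P) (snd P) \<inter> cube (fst P') (snd P') = {}) \<longrightarrow>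
           (\<Sum>\<^sub>\<infinity>P\<in>F. epow (aQ (\<lambda>k. ennreal (\<gamma> k)) h s (fst P) (snd P)) q
                        * ennreal (measure lebesgue (cube (fst P) (snd P))))
           \<le> ennreal (C powr q) * epow (aQ (gbar C CARD('n) s q \<gamma>) h s a l) q
                        * ennreal (measure lebesgue (cube a l))"
proof -
  define K where "K = Kc (real CARD('n)) s q"
  define C where "C = K + 1"
  have s0: "0 < s" using s1 by simp
  have K1: "1 \<le> K" by (simp add: K_def Kc_def)
  have C0: "0 < C" using K1 by (simp add: C_def)
  have KC: "K \<le> C powr q"
  proof -
    have "K \<le> C" by (simp add: C_def)
    also have "C = C powr 1" using C0 by simp
    also have "\<dots> \<le> C powr q" using q1 K1 by (intro powr_mono) (auto simp: C_def)
    finally show ?thesis .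
  qed
  have nu0: "0 < real CARD('n) + q - q * real CARD('n) / s"
  proof -
    have ns: "0 < real CARD('n) - s" using sn by simp
    have "q * (real CARD('n) - s) < s * real CARD('n)" using qs ns by (simp add: pos_less_divide_eq)
    then have "q * real CARD('n) < s * (real CARD('n) + q)" by (simp add: algebra_simps)
    then have "q * real CARD('n) / s < real CARD('n) + q" using s0 by (simp add: divide_less_eq mult.commute)
    then show ?thesis by simp
  qed
  show ?thesis
  proof (intro exI[of _ C] conjI C0 allI impI)
    fix a :: "real^'n" and l :: real and F :: "((real^'n) \<times> real) set"
    assume l0: "0 < l"
      and Fsub: "\<forall>P\<in>F. 0 < snd P \<and> cube (fst P) (snd P) \<subseteq> cube a l"
      and disj: "\<forall>P\<in>F. \<forall>P'\<in>F. P \<noteq> P' \<longrightarrow> cube (fst P) (snd P) \<inter> cube (fst P') (snd P') = {}"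
    show "(\<Sum>\<^sub>\<infinity>P\<in>F. epow (aQ (\<lambda>k. ennreal (\<gamma> k)) h s (fst P) (snd P)) q
                        * ennreal (measure lebesgue (cube (fst P) (snd P))))
           \<le> ennreal (C powr q) * epow (aQ (gbar C CARD('n) s q \<gamma>) h s a l) q
                        * ennreal (measure lebesgue (cube a l))"
    proof (rule infsum_le_finite_sums)
      show "(\<lambda>P. epow (aQ (\<lambda>k. ennreal (\<gamma> k)) h s (fst P) (snd P)) q
                        * ennreal (measure lebesgue (cube (fst P) (snd P)))) summable_on F" by (rule nonneg_summable_on_complete) simp
      fix G assume fG: "finite G" and GF: "G \<subseteq> F"
      have "(\<Sum>P\<in>G. epow (aQ (\<lambda>k. ennreal (\<gamma> k)) h s (fst P) (snd P)) q * ennreal (measure lebesgue (cube (fst P) (snd P))))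
         \<le> ennreal K * epow (aQ (gbar C CARD('n) s q \<gamma>) h s a l) q * ennreal (measure lebesgue (cube a l))"
        unfolding K_def
        by (rule main_finite[OF h_nonneg h_meas h_loc s0 sn q1 nu0 \<gamma>_nonneg l0 fG])
           (use Fsub disj GF in blast)+
      also have "\<dots> \<le> ennreal (C powr q) * epow (aQ (gbar C CARD('n) s q \<gamma>) h s a l) q * ennreal (measure lebesgue (cube a l))"
        using KC by (intro mult_right_mono ennreal_leI) auto
      finally show "(\<Sum>P\<in>G. epow (aQ (\<lambda>k. ennreal (\<gamma> k)) h s (fst P) (snd P)) q * ennreal (measure lebesgue (cube (fst P) (snd P))))
         \<le> ennreal (C powr q) * epow (aQ (gbar C CARD('n) s q \<gamma>) h s a l) q * ennreal (measure lebesgue (cube a l))" .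
    qed
  qed
qed


end
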